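(* In partially synchronous Streamlet with $n$ validators, if there is a safety violation (two conflicting blocks are both finalized), then one can identify at least $n/3$ validators each of which has violated one of the Streamlet slashing conditions.
   Context: Streamlet: time is divided into epochs, each with a leader. The leader of epoch $e$ proposes a block extending one of the longest notarized chains it has seen; a validator votes (at most once per epoch) for the leader's proposal if it extends one of the longest notarized chains the validator has seen. A block is notarized once it has votes from at least $2n/3$ validators. If a notarized chain contains three adjacent blocks from consecutive epochs $e-1,e,e+1$, then the block of epoch $e$ and its prefix are finalized. For a block $B$, $e_B$ denotes its epoch and $|B|$ its depth (height in the chain). Streamlet slashing conditions: a validator violates a slashing condition if (1) it votes for two blocks $B_1,B_2$ with $e_{B_1}=e_{B_2}$, or (2) it votes for $B_1,B_2$ with $e_{B_1}<e_{B_2}$ but $|B_1|>|B_2|$. *)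

theory Defs
  imports Complex_Main "HOL-Library.Sublist"
begin

text \<open>A block is identified by its whole chain back to genesis (as a real block
  contains the hash of its parent): it is the list of (epoch, payload) entries of the
  non-genesis blocks of its chain, oldest first.\<close>

type_synonym 'p block = "(nat \<times> 'p) list"

definition genesis :: "'p block" where
  "genesis = []"

definition parent :: "'p block \<Rightarrow> 'p block" where
  "parent B = butlast B"

definition epoch :: "'p block \<Rightarrow> nat" where
  "epoch B = (if B = [] then 0 else fst (last B))"

definition depth :: "'p block \<Rightarrow> nat" where
  "depth B = length B"

definition valid_block :: "'p block \<Rightarrow> bool" where
  "valid_block B \<longleftrightarrow> (\<forall>x \<in> set B. 0 < fst x)"

definition extends :: "'p block \<Rightarrow> 'p block \<Rightarrow> bool" where
  "extends B A \<longleftrightarrow> prefix A B"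

definition conflicting :: "'p block \<Rightarrow> 'p block \<Rightarrow> bool" where
  "conflicting A B \<longleftrightarrow> \<not> extends A B \<and> \<not> extends B A"

definition notarized :: "'v set \<Rightarrow> ('v \<times> 'p block) set \<Rightarrow> 'p block \<Rightarrow> bool" where
  "notarized V votes B \<longleftrightarrow>
     B = genesis \<or>
     (valid_block B \<and> real (card {v \<in> V. (v, B) \<in> votes}) \<ge> 2 * real (card V) / 3)"

definition notarized_chain :: "'v set \<Rightarrow> ('v \<times> 'p block) set \<Rightarrow> 'p block \<Rightarrow> bool" where
  "notarized_chain V votes B \<longleftrightarrow> (\<forall>A. extends B A \<longrightarrow> notarized V votes A)"

definition finalized :: "'v set \<Rightarrow> ('v \<times> 'p block) set \<Rightarrow> 'p block \<Rightarrow> bool" where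
  "finalized V votes B \<longleftrightarrow>
     (\<exists>B1 B2. extends B1 B \<and> B1 \<noteq> genesis \<and> parent B2 = B1 \<and> B2 \<noteq> genesis \<and>
        notarized_chain V votes B2 \<and>
        epoch (parent B1) + 1 = epoch B1 \<and> epoch B1 + 1 = epoch B2)"

definition safety_violation :: "'v set \<Rightarrow> ('v \<times> 'p block) set \<Rightarrow> bool" where
  "safety_violation V votes \<longleftrightarrow>
     (\<exists>B B'. finalized V votes B \<and> finalized V votes B' \<and> conflicting B B')"

definition violates_slashing :: "('v \<times> 'p block) set \<Rightarrow> 'v \<Rightarrow> bool" where
  "violates_slashing votes v \<longleftrightarrow>
     (\<exists>B1 B2. (v, B1) \<in> votes \<and> (v, B2) \<in> votes \<and> B1 \<noteq> B2 \<and> epoch B1 = epoch B2) \<or>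
     (\<exists>B1 B2. (v, B1) \<in> votes \<and> (v, B2) \<in> votes \<and> epoch B1 < epoch B2 \<and> depth B1 > depth B2)"

end

theory Submission
  imports Defs
begin

definition bad :: "'p block \<Rightarrow> 'p block \<Rightarrow> bool" where
  "bad X Y \<longleftrightarrow> (X \<noteq> Y \<and> epoch X = epoch Y) \<or> (epoch X < epoch Y \<and> depth X > depth Y)"

lemma nc_pref: "notarized_chain V votes B \<Longrightarrow> prefix A B \<Longrightarrow> notarized V votes A"
  by (simp add: notarized_chain_def extends_def)

lemma not_epoch_pos: "notarized V votes A \<Longrightarrow> A \<noteq> [] \<Longrightarrow> epoch A > 0"
  unfolding notarized_def genesis_def valid_block_def epoch_def by auto

lemma chain_lemma:
  assumes G: "\<And>X Y. notarized V votes X \<Longrightarrow> notarized V votes Y \<Longrightarrow> \<not> bad X Y"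
    and h1: "B1 \<noteq> []" and h2: "parent B2 = B1" and h3: "B2 \<noteq> []"
    and nc: "notarized_chain V votes B2"
    and e1: "epoch (parent B1) + 1 = epoch B1" and e2: "epoch B1 + 1 = epoch B2"
    and nc': "notarized_chain V votes B2'" and p': "prefix B1' B2'"
    and le: "epoch B1 \<le> epoch B1'"
  shows "prefix B1 B1'"
proof -
  obtain x where B2eq: "B2 = B1 @ [x]" using h2 h3 unfolding parent_def
    by (metis append_butlast_last_id)
  have pB1: "prefix B1 B2" using B2eq by (metis prefix_def)
  have pB0: "prefix (parent B1) B2" using pB1 prefixeq_butlast[of B1] unfolding parent_def
    using prefix_order.trans by blast
  have nB0: "notarized V votes (parent B1)" using nc pB0 nc_pref by blast
  have nB1: "notarized V votes B1" using nc pB1 nc_pref by blast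
  have nB2: "notarized V votes B2" using nc nc_pref by blast
  have epos: "epoch B1 > 0" using nB1 h1 not_epoch_pos by blast
  have dB2: "depth B2 = depth (parent B1) + 2" using B2eq h1
    unfolding depth_def parent_def by simp
  have "\<forall>C. prefix C B1' \<longrightarrow> epoch B1 \<le> epoch C \<longrightarrow> prefix B1 C"
  proof
    fix C show "prefix C B1' \<longrightarrow> epoch B1 \<le> epoch C \<longrightarrow> prefix B1 C"
    proof (induction C rule: rev_induct)
      case Nil
      then show ?case using epos by (simp add: epoch_def)
    next
      case (snoc c P)
      show ?case
      proof (intro impI)
        assume pc: "prefix (P @ [c]) B1'" and ec: "epoch B1 \<le> epoch (P @ [c])"
        have pP: "prefix P B1'" using pc by (metis prefix_order.trans prefix_def)
        show "prefix B1 (P @ [c])"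
        proof (cases "epoch B1 \<le> epoch P")
          case True
          then show ?thesis using snoc pP by (metis prefix_order.trans prefix_def)
        next
          case False
          have nC: "notarized V votes (P @ [c])" using nc' p' pc nc_pref prefix_order.trans by blast
          have nP: "notarized V votes P" using nc' p' pP nc_pref prefix_order.trans by blast
          consider "epoch (P @ [c]) = epoch B1" | "epoch (P @ [c]) = epoch B2" | "epoch (P @ [c]) > epoch B2"
            using ec e2 by linarith
          then show ?thesis
          proof cases
            case 1
            then have "P @ [c] = B1" using G[OF nC nB1] unfolding bad_def by blast
            then show ?thesis by simp
          next
            case 2
            then have "P @ [c] = B2" using G[OF nC nB2] unfolding bad_def by blast
            then have "P = B1" using h2 unfolding parent_def by (metis butlast_snoc)
            then show ?thesis using False by simp
          next
            case 3
            have d1: "depth B2 \<le> depth (P @ [c])" using G[OF nB2 nC] 3 unfolding bad_def by auto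
            have d2: "depth P \<le> depth (parent B1)"
            proof (cases "epoch P = epoch (parent B1)")
              case True
              then show ?thesis using G[OF nP nB0] unfolding bad_def by auto
            next
              case False
              then have "epoch P < epoch (parent B1)" using \<open>\<not> epoch B1 \<le> epoch P\<close> e1 by linarith
              then show ?thesis using G[OF nP nB0] unfolding bad_def by auto
            qed
            have "depth (P @ [c]) = depth P + 1" by (simp add: depth_def)
            then show ?thesis using d1 d2 dB2 by linarith
          qed
        qed
      qed
    qed
  qed
  then show ?thesis using le by blast
qed

theorem lemma1:
  fixes V :: "'v set" and votes :: "('v \<times> 'p block) set"
  assumes "finite V"
    and "safety_violation V votes"
  shows "\<exists>S \<subseteq> V. real (card S) \<ge> real (card V) / 3 \<and> (\<forall>v \<in> S. violates_slashing votes v)"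
proof -
  obtain B B' where fB: "finalized V votes B" and fB': "finalized V votes B'" and cf: "conflicting B B'"
    using assms(2) unfolding safety_violation_def by blast
  obtain B1 B2 where a1: "prefix B B1" "B1 \<noteq> []" "parent B2 = B1" "B2 \<noteq> []"
      "notarized_chain V votes B2" "epoch (parent B1) + 1 = epoch B1" "epoch B1 + 1 = epoch B2"
    using fB unfolding finalized_def extends_def genesis_def by blast
  obtain B1' B2' where a2: "prefix B' B1'" "B1' \<noteq> []" "parent B2' = B1'" "B2' \<noteq> []"
      "notarized_chain V votes B2'" "epoch (parent B1') + 1 = epoch B1'" "epoch B1' + 1 = epoch B2'"
    using fB' unfolding finalized_def extends_def genesis_def by blast
  have pB: "prefix B1 B2" using a1(3) prefixeq_butlast[of B2] unfolding parent_def by simp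
  have pB': "prefix B1' B2'" using a2(3) prefixeq_butlast[of B2'] unfolding parent_def by simp
  have c1: "\<not> prefix B1 B1'"
  proof
    assume "prefix B1 B1'"
    then have "prefix B B1'" using prefix_order.trans[OF a1(1)] by blast
    then have "prefix B B' \<or> prefix B' B" using a2(1) prefix_same_cases by blast
    then show False using cf unfolding conflicting_def extends_def by blast
  qed
  have c2: "\<not> prefix B1' B1"
  proof
    assume "prefix B1' B1"
    then have "prefix B' B1" using prefix_order.trans[OF a2(1)] by blast
    then have "prefix B B' \<or> prefix B' B" using a1(1) prefix_same_cases by blast
    then show False using cf unfolding conflicting_def extends_def by blast
  qed
  show ?thesis
  proof (cases "\<exists>X Y. notarized V votes X \<and> notarized V votes Y \<and> bad X Y")
    case False
    then have G: "\<And>X Y. notarized V votes X \<Longrightarrow> notarized V votes Y \<Longrightarrow> \<not> bad X Y" by blast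
    show ?thesis
    proof (cases "epoch B1 \<le> epoch B1'")
      case True
      then show ?thesis using chain_lemma[OF G a1(2-7) a2(5) pB'] c1 by blast
    next
      case False
      then show ?thesis using chain_lemma[OF G a2(2-7) a1(5) pB] c2 by simp
    qed
  next
    case True
    then obtain X Y where nX: "notarized V votes X" and nY: "notarized V votes Y" and b: "bad X Y" by blast
    have X0: "X \<noteq> []"
    proof
      assume "X = []"
      then show False using b nY not_epoch_pos[OF nY] unfolding bad_def by (auto simp: epoch_def depth_def)
    qed
    have Y0: "Y \<noteq> []"
    proof
      assume "Y = []"
      then show False using b nX not_epoch_pos[OF nX] unfolding bad_def by (auto simp: epoch_def depth_def)
    qed
    define QX where "QX = {v \<in> V. (v, X) \<in> votes}"
    define QY where "QY = {v \<in> V. (v, Y) \<in> votes}"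
    have qX: "real (card QX) \<ge> 2 * real (card V) / 3" 
    proof -
      have "X \<noteq> genesis" using X0 by (simp add: genesis_def)
      then show ?thesis using nX unfolding notarized_def QX_def by simp
    qed
    have qY: "real (card QY) \<ge> 2 * real (card V) / 3" 
    proof -
      have "Y \<noteq> genesis" using Y0 by (simp add: genesis_def)
      then show ?thesis using nY unfolding notarized_def QY_def by simp
    qed
    have fX: "finite QX" "finite QY" using assms(1) unfolding QX_def QY_def by auto
    have "card (QX \<union> QY) + card (QX \<inter> QY) = card QX + card QY" using card_Un_Int[OF fX] by simp
    moreover have "card (QX \<union> QY) \<le> card V" using assms(1) by (intro card_mono) (auto simp: QX_def QY_def)
    ultimately have "card QX + card QY \<le> card V + card (QX \<inter> QY)"
      by linarith
    then have "real (card QX) + real (card QY) \<le> real (card V) + real (card (QX \<inter> QY))"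
      by (metis of_nat_add of_nat_le_iff)
    then have "real (card (QX \<inter> QY)) \<ge> real (card V) / 3" using qX qY by linarith
    moreover have "\<forall>v \<in> QX \<inter> QY. violates_slashing votes v"
    proof
      fix v assume "v \<in> QX \<inter> QY"
      then have "(v, X) \<in> votes" "(v, Y) \<in> votes" unfolding QX_def QY_def by auto
      then show "violates_slashing votes v" using b unfolding violates_slashing_def bad_def by blast
    qed
    moreover have "QX \<inter> QY \<subseteq> V" unfolding QX_def by auto
    ultimately show ?thesis by (intro exI[of _ "QX \<inter> QY"]) blast
  qed
qed

end
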